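(* Let $\mathfrak g$ be an $n$-dimensional filiform Lie algebra with associated triple $(z_1,n-2,n)$, $z_1<n-2$. Then for every $\ell$ with $3\le\ell\le\theta_2(\mathfrak g)-1$, $$\dim[C^2\mathfrak g,C^{\ell+1}\mathfrak g]=\dim[C^2\mathfrak g,C^\ell\mathfrak g]-1.$$ Moreover $\theta_2(\mathfrak g)=\dim[C^2\mathfrak g,C^2\mathfrak g]+3$.
   Context: All Lie algebras are over $\mathbb C$; $C^1\mathfrak g=\mathfrak g$, $C^k\mathfrak g=[C^{k-1}\mathfrak g,\mathfrak g]$. A Lie algebra is filiform if $\dim\mathfrak g=n\ge2$ and $\dim C^k\mathfrak g=n-k$ for $2\le k\le n$. An adapted basis of a filiform $\mathfrak g$ is a basis $\{e_1,\dots,e_n\}$ with $[e_1,e_h]=e_{h-1}$ ($3\le h\le n$), $[e_2,e_h]=0$ ($1\le h\le n$), $[e_3,e_h]=0$ ($2\le h\le n$). For non-model filiform $\mathfrak g$, $z_1=\min\{k\ge4:[e_k,e_n]\ne0\}$, $z_2=\min\{k\ge4:[e_k,e_{k+1}]\ne0\}$ (in any adapted basis) are invariants; $(z_1,z_2,n)$ is the associated triple. For a nilpotent Lie algebra $\mathfrak g$ and $k\ge1$, $\theta_k(\mathfrak g)$ is the minimal $\ell$ such that $[C^k\mathfrak g,C^\ell\mathfrak g]=\{0\}$. *)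

theory Defs
  imports Complex_Main
begin

definition lie_algebra :: "(complex \<Rightarrow> 'v::ab_group_add \<Rightarrow> 'v) \<Rightarrow> ('v \<Rightarrow> 'v \<Rightarrow> 'v) \<Rightarrow> bool" where
  "lie_algebra sc br \<longleftrightarrow>
     Vector_Spaces.vector_space sc \<and>
     (\<forall>x. Vector_Spaces.linear sc sc (br x)) \<and>
     (\<forall>y. Vector_Spaces.linear sc sc (\<lambda>x. br x y)) \<and>
     (\<forall>x. br x x = 0) \<and>
     (\<forall>x y z. br x (br y z) + br y (br z x) + br z (br x y) = 0)"

definition brs :: "(complex \<Rightarrow> 'v::ab_group_add \<Rightarrow> 'v) \<Rightarrow> ('v \<Rightarrow> 'v \<Rightarrow> 'v) \<Rightarrow> 'v set \<Rightarrow> 'v set \<Rightarrow> 'v set" where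
  "brs sc br A B = module.span sc {br a b | a b. a \<in> A \<and> b \<in> B}"

text \<open>Lower central series: C^1 = g, C^k = [C^(k-1), g]  (C^0 := g by convention, unused).\<close>
fun lcs :: "(complex \<Rightarrow> 'v::ab_group_add \<Rightarrow> 'v) \<Rightarrow> ('v \<Rightarrow> 'v \<Rightarrow> 'v) \<Rightarrow> nat \<Rightarrow> 'v set" where
  "lcs sc br 0 = UNIV"
| "lcs sc br (Suc 0) = UNIV"
| "lcs sc br (Suc (Suc k)) = brs sc br (lcs sc br (Suc k)) UNIV"

definition ldim :: "(complex \<Rightarrow> 'v::ab_group_add \<Rightarrow> 'v) \<Rightarrow> 'v set \<Rightarrow> nat" where
  "ldim sc S = vector_space.dim sc S"

definition has_dim :: "(complex \<Rightarrow> 'v::ab_group_add \<Rightarrow> 'v) \<Rightarrow> nat \<Rightarrow> bool" where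
  "has_dim sc n \<longleftrightarrow> (\<exists>B. finite B \<and> module.span sc B = UNIV) \<and> vector_space.dim sc (UNIV::'v set) = n"

definition filiform :: "(complex \<Rightarrow> 'v::ab_group_add \<Rightarrow> 'v) \<Rightarrow> ('v \<Rightarrow> 'v \<Rightarrow> 'v) \<Rightarrow> nat \<Rightarrow> bool" where
  "filiform sc br n \<longleftrightarrow> lie_algebra sc br \<and> has_dim sc n \<and> n \<ge> 2 \<and>
     (\<forall>k. 2 \<le> k \<and> k \<le> n \<longrightarrow> ldim sc (lcs sc br k) = n - k)"

definition is_basis_seq :: "(complex \<Rightarrow> 'v::ab_group_add \<Rightarrow> 'v) \<Rightarrow> nat \<Rightarrow> (nat \<Rightarrow> 'v) \<Rightarrow> bool" where
  "is_basis_seq sc n e \<longleftrightarrow> inj_on e {1..n} \<and> \<not> module.dependent sc (e ` {1..n})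
     \<and> module.span sc (e ` {1..n}) = UNIV"

definition adapted_basis :: "(complex \<Rightarrow> 'v::ab_group_add \<Rightarrow> 'v) \<Rightarrow> ('v \<Rightarrow> 'v \<Rightarrow> 'v) \<Rightarrow> nat \<Rightarrow> (nat \<Rightarrow> 'v) \<Rightarrow> bool" where
  "adapted_basis sc br n e \<longleftrightarrow> is_basis_seq sc n e \<and>
     (\<forall>h. 3 \<le> h \<and> h \<le> n \<longrightarrow> br (e 1) (e h) = e (h - 1)) \<and>
     (\<forall>h. 1 \<le> h \<and> h \<le> n \<longrightarrow> br (e 2) (e h) = 0) \<and>
     (\<forall>h. 2 \<le> h \<and> h \<le> n \<longrightarrow> br (e 3) (e h) = 0)"

definition model_filiform :: "(complex \<Rightarrow> 'v::ab_group_add \<Rightarrow> 'v) \<Rightarrow> ('v \<Rightarrow> 'v \<Rightarrow> 'v) \<Rightarrow> nat \<Rightarrow> bool" where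
  "model_filiform sc br n \<longleftrightarrow> (\<exists>e. adapted_basis sc br n e \<and>
     (\<forall>i j. 2 \<le> i \<and> i \<le> n \<and> 2 \<le> j \<and> j \<le> n \<longrightarrow> br (e i) (e j) = 0))"

definition assoc_triple :: "(complex \<Rightarrow> 'v::ab_group_add \<Rightarrow> 'v) \<Rightarrow> ('v \<Rightarrow> 'v \<Rightarrow> 'v) \<Rightarrow> nat \<Rightarrow> nat \<Rightarrow> nat \<Rightarrow> bool" where
  "assoc_triple sc br z1 z2 n \<longleftrightarrow> filiform sc br n \<and> \<not> model_filiform sc br n \<and>
     (\<exists>e. adapted_basis sc br n e \<and>
        4 \<le> z1 \<and> z1 \<le> n \<and> br (e z1) (e n) \<noteq> 0 \<and>
        (\<forall>k. 4 \<le> k \<and> k < z1 \<longrightarrow> br (e k) (e n) = 0) \<and>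
        4 \<le> z2 \<and> z2 + 1 \<le> n \<and> br (e z2) (e (z2 + 1)) \<noteq> 0 \<and>
        (\<forall>k. 4 \<le> k \<and> k < z2 \<longrightarrow> br (e k) (e (k + 1)) = 0))"

definition theta :: "(complex \<Rightarrow> 'v::ab_group_add \<Rightarrow> 'v) \<Rightarrow> ('v \<Rightarrow> 'v \<Rightarrow> 'v) \<Rightarrow> nat \<Rightarrow> nat" where
  "theta sc br k = (LEAST l. 1 \<le> l \<and> brs sc br (lcs sc br k) (lcs sc br l) = {0})"

end

theory Submission
  imports Defs
begin
locale fil =
  fixes sc :: "complex \<Rightarrow> 'v::ab_group_add \<Rightarrow> 'v" and br :: "'v \<Rightarrow> 'v \<Rightarrow> 'v"
    and n :: nat and e :: "nat \<Rightarrow> 'v"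
  assumes vs: "vector_space sc"
  and linr: "\<And>x. Vector_Spaces.linear sc sc (br x)"
  and linl: "\<And>y. Vector_Spaces.linear sc sc (\<lambda>x. br x y)"
  and alt: "\<And>x. br x x = 0"
  and jac: "\<And>x y z. br x (br y z) + br y (br z x) + br z (br x y) = 0"
  and basis: "is_basis_seq sc n e"
  and e1: "\<And>h. 3 \<le> h \<Longrightarrow> h \<le> n \<Longrightarrow> br (e 1) (e h) = e (h - 1)"
  and e2: "\<And>h. 1 \<le> h \<Longrightarrow> h \<le> n \<Longrightarrow> br (e 2) (e h) = 0"
  and e3: "\<And>h. 2 \<le> h \<Longrightarrow> h \<le> n \<Longrightarrow> br (e 3) (e h) = 0"
  and dims: "\<And>k. 2 \<le> k \<Longrightarrow> k \<le> n \<Longrightarrow> ldim sc (lcs sc br k) = n - k"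
  and n6: "6 \<le> n"
  and z2a: "\<And>k. 4 \<le> k \<Longrightarrow> k < n - 2 \<Longrightarrow> br (e k) (e (k + 1)) = 0"
  and z2b: "br (e (n - 2)) (e (n - 1)) \<noteq> 0"
begin

sublocale vector_space sc by (rule vs)

lemma add_r: "br x (y + z) = br x y + br x z" using linr[of x] unfolding Vector_Spaces.linear_iff by auto
lemma add_l: "br (y + z) x = br y x + br z x" using linl[of x] unfolding Vector_Spaces.linear_iff by auto
lemma scale_r: "br x (sc c y) = sc c (br x y)" using linr[of x] unfolding Vector_Spaces.linear_iff by auto
lemma scale_l: "br (sc c y) x = sc c (br y x)" using linl[of x] unfolding Vector_Spaces.linear_iff by auto
lemma zero_r[simp]: "br x 0 = 0" using add_r[of x 0 0] by simp
lemma zero_l[simp]: "br 0 x = 0" using add_l[of 0 0 x] by simp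
lemma neg_r: "br x (- y) = - br x y"
proof -
  have "br x y + br x (- y) = 0" using add_r[of x y "-y"] by simp
  then show ?thesis by (metis minus_unique)
qed
lemma anti: "br x y = - br y x"
proof -
  have "br (x + y) (x + y) = 0" by (rule alt)
  then have "br x x + (br y x + (br x y + br y y)) = 0" by (simp add: add_r add_l add.assoc)
  then have "br x y + br y x = 0" by (simp add: alt add.commute)
  then show ?thesis by (metis minus_unique add.commute)
qed
lemma deriv: "br a (br b c) = br (br a b) c + br b (br a c)"
proof -
  have "br a (br b c) + br b (br c a) + br c (br a b) = 0" by (rule jac)
  moreover have "br b (br c a) = - br b (br a c)" by (metis anti neg_r)
  moreover have "br c (br a b) = - br (br a b) c" by (metis anti)
  ultimately show ?thesis by (simp add: eq_neg_iff_add_eq_0 algebra_simps)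
qed

definition bb :: "nat \<Rightarrow> nat \<Rightarrow> 'v" where "bb i j = br (e i) (e j)"

lemma Dder: "3 \<le> i \<Longrightarrow> i \<le> n \<Longrightarrow> 3 \<le> j \<Longrightarrow> j \<le> n \<Longrightarrow>
   br (e 1) (bb i j) = bb (i - 1) j + bb i (j - 1)"
  unfolding bb_def using deriv[of "e 1" "e i" "e j"] e1 by simp

lemma b_low: "2 \<le> i \<Longrightarrow> i \<le> 3 \<Longrightarrow> 2 \<le> j \<Longrightarrow> j \<le> n \<Longrightarrow> bb i j = 0"
proof -
  assume a: "2 \<le> i" "i \<le> 3" "2 \<le> j" "j \<le> n"
  show ?thesis
  proof (cases "i = 2")
    case True then show ?thesis using e2 a unfolding bb_def by simp
  next
    case False then have "i = 3" using a by simp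
    then show ?thesis using e3 a unfolding bb_def by simp
  qed
qed

lemma b_abel_aux: "\<forall>i. 2 \<le> i \<longrightarrow> i + d \<le> n - 2 \<longrightarrow> bb i (i + d) = 0"
proof (induction d rule: less_induct)
  case (less d)
  show ?case
  proof (intro allI impI)
    fix i assume i: "2 \<le> i" "i + d \<le> n - 2"
    show "bb i (i + d) = 0"
    proof (cases "i \<le> 3")
      case True then show ?thesis using b_low i by simp
    next
      case False
      show ?thesis
      proof (cases "d \<le> 1")
        case True
        then consider "d = 0" | "d = 1" by linarith
        then show ?thesis
        proof cases
          case 1 then show ?thesis by (simp add: bb_def alt)
        next
          case 2 then show ?thesis using z2a[of i] False i unfolding bb_def by simp
        qed
      next
        case d: False
        have IH1: "\<forall>i. 2 \<le> i \<longrightarrow> i + (d - 1) \<le> n - 2 \<longrightarrow> bb i (i + (d - 1)) = 0"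
          by (rule less.IH) (use d in simp)
        have "bb (i + 1) ((i + 1) + (d - 1)) = 0"
          by (rule IH1[rule_format]) (use i d in auto)
        moreover have "(i + 1) + (d - 1) = i + d" using d by simp
        ultimately have h1: "bb (i + 1) (i + d) = 0" by simp
        have IH2: "\<forall>i. 2 \<le> i \<longrightarrow> i + (d - 2) \<le> n - 2 \<longrightarrow> bb i (i + (d - 2)) = 0"
          by (rule less.IH) (use d in simp)
        have "bb (i + 1) ((i + 1) + (d - 2)) = 0"
          by (rule IH2[rule_format]) (use i d in auto)
        moreover have "(i + 1) + (d - 2) = i + d - 1" using d by simp
        ultimately have h2: "bb (i + 1) (i + d - 1) = 0" by metis
        have "br (e 1) (bb (i + 1) (i + d)) = bb i (i + d) + bb (i + 1) (i + d - 1)"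
          using Dder[of "i + 1" "i + d"] False i d by simp
        then show ?thesis using h1 h2 by simp
      qed
    qed
  qed
qed

lemma b_abel: "2 \<le> i \<Longrightarrow> i \<le> n - 2 \<Longrightarrow> 2 \<le> j \<Longrightarrow> j \<le> n - 2 \<Longrightarrow> bb i j = 0"
proof (cases "i \<le> j")
  case True
  assume a: "2 \<le> i" "i \<le> n - 2" "2 \<le> j" "j \<le> n - 2"
  then show ?thesis using b_abel_aux[of "j - i"] True by auto
next
  case False
  assume a: "2 \<le> i" "i \<le> n - 2" "2 \<le> j" "j \<le> n - 2"
  then have "bb j i = 0" using b_abel_aux[of "i - j"] False by auto
  then show ?thesis unfolding bb_def by (metis anti neg_0_equal_iff_equal)
qed

end
context fil begin

definition D :: "'v \<Rightarrow> 'v" where "D = br (e 1)"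
definition u :: "nat \<Rightarrow> 'v" where "u t = (D ^^ t) (bb (n - 2) (n - 1))"

lemma u_Suc: "u (Suc t) = D (u t)" unfolding u_def by simp
lemma u_0: "u 0 \<noteq> 0" unfolding u_def bb_def using z2b by simp

lemma b_top: "t \<le> n - 4 \<Longrightarrow> bb (n - 2 - t) (n - 1) = u t"
proof (induction t)
  case 0 then show ?case unfolding u_def by simp
next
  case (Suc t)
  have IH: "bb (n - 2 - t) (n - 1) = u t" using Suc by simp
  have "D (bb (n - 2 - t) (n - 1)) = bb (n - 2 - t - 1) (n - 1) + bb (n - 2 - t) (n - 1 - 1)"
    unfolding D_def by (rule Dder) (use Suc n6 in auto)
  moreover have "bb (n - 2 - t) (n - 1 - 1) = 0" by (rule b_abel) (use Suc n6 in auto)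
  moreover have "n - 2 - t - 1 = n - 2 - Suc t" by simp
  ultimately show ?case using IH u_Suc by simp
qed

lemma u_n5: "u (n - 5) = 0"
proof -
  have "bb (n - 2 - (n - 5)) (n - 1) = u (n - 5)" by (rule b_top) (use n6 in auto)
  moreover have "n - 2 - (n - 5) = 3" using n6 by simp
  ultimately show ?thesis using e3[of "n - 1"] n6 unfolding bb_def by simp
qed

lemma D_zero: "D 0 = 0" unfolding D_def by simp

lemma u_zero_mono: "u q = 0 \<Longrightarrow> q \<le> s \<Longrightarrow> u s = 0"
proof (induction s)
  case 0 then show ?case by simp
next
  case (Suc s) then show ?case
    by (cases "q = Suc s") (auto simp: u_Suc D_zero)
qed

definition p :: nat where "p = (LEAST t. u t = 0)"

lemma p_zero: "u p = 0" unfolding p_def by (rule LeastI[of _ "n - 5"]) (rule u_n5)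
lemma p_le: "p \<le> n - 5" unfolding p_def by (rule Least_le) (rule u_n5)
lemma p_nz: "s < p \<Longrightarrow> u s \<noteq> 0" unfolding p_def using not_less_Least by blast
lemma p_ge: "p \<le> s \<Longrightarrow> u s = 0" using u_zero_mono p_zero by blast
lemma p_pos: "1 \<le> p" using p_zero u_0 by (cases p) auto

lemma D_add: "D (x + y) = D x + D y" unfolding D_def by (rule add_r)
lemma D_scale: "D (sc c x) = sc c (D x)" unfolding D_def by (rule scale_r)

lemma Dk_add: "(D ^^ k) (x + y) = (D ^^ k) x + (D ^^ k) y"
  by (induction k) (auto simp: D_add)
lemma Dk_scale: "(D ^^ k) (sc c x) = sc c ((D ^^ k) x)"
  by (induction k) (auto simp: D_scale)
lemma Dk_zero: "(D ^^ k) 0 = 0"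
  by (induction k) (auto simp: D_zero)
lemma Dk_sum: "finite A \<Longrightarrow> (D ^^ k) (\<Sum>x\<in>A. f x) = (\<Sum>x\<in>A. (D ^^ k) (f x))"
  by (induction A rule: finite_induct) (auto simp: Dk_add Dk_zero)
lemma Dk_u: "(D ^^ k) (u s) = u (s + k)"
  unfolding u_def by (simp add: funpow_add add.commute)

lemma u_inj: "inj_on u {0..<p}"
proof (rule inj_onI)
  fix s t assume st: "s \<in> {0..<p}" "t \<in> {0..<p}" "u s = u t"
  show "s = t"
  proof (rule ccontr)
    assume "s \<noteq> t"
    then consider "s < t" | "t < s" by linarith
    then show False
    proof cases
      case 1
      have "(D ^^ (p - 1 - s)) (u s) = (D ^^ (p - 1 - s)) (u t)" using st by simp
      then have "u (s + (p - 1 - s)) = u (t + (p - 1 - s))" by (simp only: Dk_u)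
      moreover have "s + (p - 1 - s) = p - 1" using st by auto
      ultimately have "u (p - 1) = u (t + (p - 1 - s))" by simp
      moreover have "u (t + (p - 1 - s)) = 0" by (rule p_ge) (use st 1 in auto)
      ultimately show False using p_nz[of "p - 1"] p_pos by simp
    next
      case 2
      have "(D ^^ (p - 1 - t)) (u t) = (D ^^ (p - 1 - t)) (u s)" using st by simp
      then have "u (t + (p - 1 - t)) = u (s + (p - 1 - t))" by (simp only: Dk_u)
      moreover have "t + (p - 1 - t) = p - 1" using st by auto
      ultimately have "u (p - 1) = u (s + (p - 1 - t))" by simp
      moreover have "u (s + (p - 1 - t)) = 0" by (rule p_ge) (use st 2 in auto)
      ultimately show False using p_nz[of "p - 1"] p_pos by simp
    qed
  qed
qed

lemma u_inj': "inj_on u {a..<p}" using u_inj by (rule inj_on_subset) auto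

lemma u_indep: "independent (u ` {a..<p})"
proof
  assume dep: "dependent (u ` {a..<p})"
  obtain c where c: "\<exists>v\<in>u ` {a..<p}. c v \<noteq> 0" "(\<Sum>v\<in>u ` {a..<p}. sc (c v) v) = 0"
    using dep dependent_finite[of "u ` {a..<p}"] by auto
  have S: "(\<Sum>s\<in>{a..<p}. sc (c (u s)) (u s)) = 0"
    using c(2) sum.reindex[OF u_inj', of "\<lambda>v. sc (c v) v" a] by simp
  define A where "A = {s\<in>{a..<p}. c (u s) \<noteq> 0}"
  have A: "finite A" "A \<noteq> {}" using c(1) unfolding A_def by auto
  define s0 where "s0 = Min A"
  have s0: "s0 \<in> A" "\<And>s. s \<in> A \<Longrightarrow> s0 \<le> s" using A unfolding s0_def by auto
  define k where "k = p - 1 - s0"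
  have "(D ^^ k) (\<Sum>s\<in>{a..<p}. sc (c (u s)) (u s)) = 0" using S Dk_zero by simp
  then have S2: "(\<Sum>s\<in>{a..<p}. sc (c (u s)) (u (s + k))) = 0"
    by (simp add: Dk_sum Dk_scale Dk_u)
  have s0in: "s0 \<in> {a..<p}" using s0 unfolding A_def by auto
  have "(\<Sum>s\<in>{a..<p}. sc (c (u s)) (u (s + k))) =
        sc (c (u s0)) (u (s0 + k)) + (\<Sum>s\<in>{a..<p} - {s0}. sc (c (u s)) (u (s + k)))"
    using sum.remove[OF _ s0in] by simp
  moreover have "(\<Sum>s\<in>{a..<p} - {s0}. sc (c (u s)) (u (s + k))) = 0"
  proof (rule sum.neutral, rule ballI)
    fix s assume s: "s \<in> {a..<p} - {s0}"
    show "sc (c (u s)) (u (s + k)) = 0"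
    proof (cases "s < s0")
      case True then have "s \<notin> A" using s0 by force
      then show ?thesis using s unfolding A_def by auto
    next
      case False then have "p \<le> s + k" using s s0in unfolding k_def by auto
      then show ?thesis using p_ge by simp
    qed
  qed
  ultimately have "sc (c (u s0)) (u (s0 + k)) = 0" using S2 by simp
  moreover have "s0 + k = p - 1" using s0in unfolding k_def by auto
  ultimately have "c (u s0) = 0" using p_nz[of "p - 1"] p_pos by simp
  then show False using s0 unfolding A_def by auto
qed

lemma dim_U: "dim (span (u ` {a..<p})) = p - a"
  using dim_span_eq_card_independent[OF u_indep] card_image[OF u_inj'] by simp

lemma span_U_zero: "span (u ` {a..<p}) = {0} \<longleftrightarrow> p \<le> a"
proof
  assume "span (u ` {a..<p}) = {0}"
  then show "p \<le> a" using span_base[of "u a" "u ` {a..<p}"] p_nz[of a] by (cases "a < p") auto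
next
  assume "p \<le> a" then show "span (u ` {a..<p}) = {0}" by simp
qed

end
context fil begin

lemma brs_span: "brs sc br (span A) (span B) = span {br a b |a b. a \<in> A \<and> b \<in> B}"
proof
  let ?G = "span {br a b |a b. a \<in> A \<and> b \<in> B}"
  have inner: "br x y \<in> ?G" if x: "x \<in> span A" and y: "y \<in> span B" for x y
  proof -
    have "span B \<subseteq> br a -` ?G" if a: "a \<in> A" for a
    proof (rule span_minimal)
      show "B \<subseteq> br a -` ?G" using a by (auto intro: span_base)
      show "subspace (br a -` ?G)"
        using module_hom.subspace_vimage[of sc sc "br a" ?G] linr[of a]
        by (simp add: module_hom_iff_linear)
    qed
    then have yA: "\<And>a. a \<in> A \<Longrightarrow> br a y \<in> ?G" using y by auto
    have "span A \<subseteq> (\<lambda>x. br x y) -` ?G"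
    proof (rule span_minimal)
      show "A \<subseteq> (\<lambda>x. br x y) -` ?G" using yA by auto
      show "subspace ((\<lambda>x. br x y) -` ?G)"
        using module_hom.subspace_vimage[of sc sc "\<lambda>x. br x y" ?G] linl[of y]
        by (simp add: module_hom_iff_linear)
    qed
    then show ?thesis using x by auto
  qed
  show "brs sc br (span A) (span B) \<subseteq> ?G"
    unfolding brs_def by (rule span_minimal) (use inner in auto)
  show "?G \<subseteq> brs sc br (span A) (span B)"
    unfolding brs_def by (rule span_mono) (auto intro: span_base)
qed

lemma negspan: "- x \<in> span S \<Longrightarrow> x \<in> span S"
  using span_neg[of "- x" S] by simp

lemma lcs_Suc: "1 \<le> k \<Longrightarrow> lcs sc br (Suc k) = brs sc br (lcs sc br k) UNIV"
  by (cases k) auto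

lemma e_in_lcs: "2 \<le> h \<Longrightarrow> h \<le> n - m \<Longrightarrow> e h \<in> lcs sc br (Suc m)"
proof (induction m arbitrary: h)
  case 0 then show ?case by simp
next
  case (Suc m)
  have "e (h + 1) \<in> lcs sc br (Suc m)" using Suc by simp
  moreover have "br (e 1) (e (h + 1)) = e h" using e1[of "h + 1"] Suc by simp
  then have "- e h = br (e (h + 1)) (e 1)" using anti[of "e (h + 1)" "e 1"] by simp
  ultimately have "- e h \<in> {br a b |a b. a \<in> lcs sc br (Suc m) \<and> b \<in> UNIV}"
    by blast
  then have "- e h \<in> brs sc br (lcs sc br (Suc m)) UNIV" unfolding brs_def by (rule span_base)
  then have "e h \<in> brs sc br (lcs sc br (Suc m)) UNIV" unfolding brs_def
    by (rule negspan)
  then show ?case by simp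
qed

lemma lcs_subspace: "subspace (lcs sc br k)"
proof (cases k)
  case 0 then show ?thesis by simp
next
  case (Suc m) then show ?thesis by (cases m) (auto simp: brs_def)
qed

lemma e_inj: "inj_on e {1..n}" using basis unfolding is_basis_seq_def by simp
lemma e_indep: "independent (e ` {1..n})" using basis unfolding is_basis_seq_def by simp
lemma e_span: "span (e ` {1..n}) = UNIV" using basis unfolding is_basis_seq_def by simp

interpretation fd: finite_dimensional_vector_space sc "e ` {1..n}"
  by unfold_locales (fact finite_imageI[OF finite_atLeastAtMost], fact e_indep, fact e_span)

lemma lcs_eq_le: "2 \<le> k \<Longrightarrow> k \<le> n \<Longrightarrow> lcs sc br k = span (e ` {2..n+1-k})"
proof -
  assume k: "2 \<le> k" "k \<le> n"
  have sub: "span (e ` {2..n+1-k}) \<subseteq> lcs sc br k"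
  proof (rule span_minimal)
    show "e ` {2..n+1-k} \<subseteq> lcs sc br k"
      using e_in_lcs[of _ "k - 1"] k by auto
  qed (rule lcs_subspace)
  have "e ` {2..n+1-k} \<subseteq> e ` {1..n}" using k by (intro image_mono) auto
  then have ind: "independent (e ` {2..n+1-k})" by (rule independent_mono[OF e_indep])
  have sub2: "{2..n+1-k} \<subseteq> {1..n}" using k by auto
  have "card (e ` {2..n+1-k}) = card {2..n+1-k}"
    using card_image[OF inj_on_subset[OF e_inj sub2]] .
  then have "card (e ` {2..n+1-k}) = n - k" using k by simp
  then have "dim (span (e ` {2..n+1-k})) = n - k" using dim_span_eq_card_independent[OF ind] by simp
  moreover have "dim (lcs sc br k) = n - k" using dims[OF k] unfolding ldim_def by simp
  ultimately show ?thesis using fd.subspace_dim_equal[OF subspace_span lcs_subspace sub] by simp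
qed

lemma lcs_eq: "2 \<le> k \<Longrightarrow> lcs sc br k = span (e ` {2..n+1-k})"
proof (induction k rule: nat_induct_at_least)
  case base then show ?case using lcs_eq_le[of 2] n6 by simp
next
  case (Suc k)
  show ?case
  proof (cases "Suc k \<le> n")
    case True then show ?thesis using lcs_eq_le[of "Suc k"] Suc by simp
  next
    case False
    then have "e ` {2..n+1-k} = {}" by auto
    then have "lcs sc br k = span {}" using Suc by simp
    then have "lcs sc br (Suc k) = brs sc br {0} UNIV" using lcs_Suc[of k] Suc by simp
    also have "\<dots> = {0}" using brs_span[of "{}" UNIV] by simp
    finally show ?thesis using False by simp
  qed
qed

lemma key: "2 \<le> l \<Longrightarrow> brs sc br (lcs sc br 2) (lcs sc br l) = span (u ` {l - 3..<p})"
proof -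
  assume l: "2 \<le> l"
  let ?G = "{br a b |a b. a \<in> e ` {2..n+1-2} \<and> b \<in> e ` {2..n+1-l}}"
  have "brs sc br (lcs sc br 2) (lcs sc br l) = span ?G"
    using lcs_eq[of 2] lcs_eq[of l] l brs_span by simp
  also have "\<dots> = span (u ` {l - 3..<p})"
  proof
    show "span ?G \<subseteq> span (u ` {l - 3..<p})"
    proof (rule span_minimal[OF _ subspace_span], rule subsetI)
      fix x assume "x \<in> ?G"
      then obtain i j where ij: "x = bb i j" "2 \<le> i" "i \<le> n - 1" "2 \<le> j" "j \<le> n + 1 - l"
        unfolding bb_def by auto
      have uin: "u s \<in> span (u ` {l - 3..<p})" if "l - 3 \<le> s" for s
      proof (cases "s < p")
        case True then show ?thesis using that by (auto intro: span_base)
      next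
        case False then show ?thesis using p_ge span_zero by simp
      qed
      consider "i \<le> n - 2 \<and> j \<le> n - 2" | "i = n - 1 \<and> j = n - 1"
        | "i \<le> n - 2 \<and> j = n - 1" | "i = n - 1 \<and> j \<le> n - 2" using ij l by linarith
      then show "x \<in> span (u ` {l - 3..<p})"
      proof cases
        case 1 then show ?thesis using b_abel ij span_zero by simp
      next
        case 2 then show ?thesis using ij alt span_zero unfolding bb_def by simp
      next
        case 3
        have "bb (n - 2 - (n - 2 - i)) (n - 1) = u (n - 2 - i)" by (rule b_top) (use ij n6 in auto)
        moreover have "n - 2 - (n - 2 - i) = i" using 3 by arith
        moreover have "l - 3 \<le> n - 2 - i" using 3 ij by simp
        ultimately show ?thesis using 3 ij uin by simp
      next
        case 4
        have "bb (n - 2 - (n - 2 - j)) (n - 1) = u (n - 2 - j)" by (rule b_top) (use ij n6 in auto)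
        moreover have "n - 2 - (n - 2 - j) = j" using 4 by arith
        moreover have "l - 3 \<le> n - 2 - j" using 4 ij by simp
        ultimately have bj: "bb j (n - 1) = u (n - 2 - j)" "l - 3 \<le> n - 2 - j" by simp_all
        have "x = - u (n - 2 - j)" using ij(1) 4 bj anti[of "e (n - 1)" "e j"] unfolding bb_def by simp
        then show ?thesis using uin[OF bj(2)] span_neg by simp
      qed
    qed
    show "span (u ` {l - 3..<p}) \<subseteq> span ?G"
    proof (rule span_minimal[OF _ subspace_span], rule subsetI)
      fix x assume "x \<in> u ` {l - 3..<p}"
      then obtain s where s: "x = u s" "l - 3 \<le> s" "s < p" by auto
      have sp: "s \<le> n - 6" using s p_le n6 by simp
      have "bb (n - 2 - s) (n - 1) = u s" by (rule b_top) (use sp n6 in auto)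
      then have "- x = br (e (n - 1)) (e (n - 2 - s))" using s anti[of "e (n - 1)" "e (n - 2 - s)"]
        unfolding bb_def by simp
      moreover have "n - 2 - s \<le> n + 1 - l" using s sp by simp
      moreover have "2 \<le> n - 2 - s" using sp n6 by simp
      moreover have "e (n - 1) \<in> e ` {2..n+1-2}" using n6 by auto
      ultimately have "e (n - 2 - s) \<in> e ` {2..n+1-l}" "e (n - 1) \<in> e ` {2..n+1-2}"
        "- x = br (e (n - 1)) (e (n - 2 - s))" by auto
      then have "- x \<in> ?G" by blast
      then have "- x \<in> span ?G" by (rule span_base)
      then show "x \<in> span ?G" by (rule negspan)
    qed
  qed
  finally show ?thesis .
qed

lemma l1_nz: "brs sc br (lcs sc br 2) (lcs sc br 1) \<noteq> {0}"
proof -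
  have "brs sc br (lcs sc br 2) (lcs sc br 1) = lcs sc br 3"
    by (simp add: numeral_3_eq_3 numeral_2_eq_2)
  moreover have "e 2 \<in> lcs sc br 3" using e_in_lcs[of 2 2] n6 by (simp add: numeral_3_eq_3)
  moreover have "e 2 \<noteq> 0" using dependent_zero[of "e ` {1..n}"] e_indep n6 by force
  ultimately show ?thesis by auto
qed

lemma theta_eq: "theta sc br 2 = p + 3"
  unfolding theta_def
proof (rule Least_equality)
  show "1 \<le> p + 3 \<and> brs sc br (lcs sc br 2) (lcs sc br (p + 3)) = {0}"
    using key[of "p + 3"] span_U_zero by simp
next
  fix y assume y: "1 \<le> y \<and> brs sc br (lcs sc br 2) (lcs sc br y) = {0}"
  show "p + 3 \<le> y"
  proof (cases "y = 1")
    case True then show ?thesis using y l1_nz by simp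
  next
    case False
    then have "span (u ` {y - 3..<p}) = {0}" using y key[of y] by simp
    then show ?thesis using span_U_zero[of "y - 3"] p_pos by simp
  qed
qed

lemma ldim_key: "2 \<le> l \<Longrightarrow> ldim sc (brs sc br (lcs sc br 2) (lcs sc br l)) = p - (l - 3)"
  unfolding ldim_def using key dim_U by simp

lemma result:
  "(\<forall>l. 3 \<le> l \<and> l \<le> theta sc br 2 - 1 \<longrightarrow>
            ldim sc (brs sc br (lcs sc br 2) (lcs sc br (l + 1)))
              = ldim sc (brs sc br (lcs sc br 2) (lcs sc br l)) - 1)
       \<and> theta sc br 2 = ldim sc (brs sc br (lcs sc br 2) (lcs sc br 2)) + 3"
  using theta_eq ldim_key by auto

end
theorem mainTheorem13:
  fixes sc :: "complex \<Rightarrow> 'v::ab_group_add \<Rightarrow> 'v"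
    and br :: "'v \<Rightarrow> 'v \<Rightarrow> 'v"
    and n z1 :: nat
  assumes "assoc_triple sc br z1 (n - 2) n"
    and "z1 < n - 2"
  shows "(\<forall>l. 3 \<le> l \<and> l \<le> theta sc br 2 - 1 \<longrightarrow>
            ldim sc (brs sc br (lcs sc br 2) (lcs sc br (l + 1)))
              = ldim sc (brs sc br (lcs sc br 2) (lcs sc br l)) - 1)
       \<and> theta sc br 2 = ldim sc (brs sc br (lcs sc br 2) (lcs sc br 2)) + 3"
proof -
  have F: "filiform sc br n" using assms(1) unfolding assoc_triple_def by simp
  obtain e where E: "adapted_basis sc br n e" "4 \<le> n - 2" "n - 2 + 1 \<le> n"
      "br (e (n - 2)) (e (n - 2 + 1)) \<noteq> 0"
      "\<forall>k. 4 \<le> k \<and> k < n - 2 \<longrightarrow> br (e k) (e (k + 1)) = 0"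
    using assms(1) unfolding assoc_triple_def by blast
  have n6: "6 \<le> n" using E(2) by simp
  have z2b: "br (e (n - 2)) (e (n - 1)) \<noteq> 0"
  proof -
    have "n - 2 + 1 = n - 1" using n6 by simp
    then show ?thesis using E(4) by simp
  qed
  have L: "lie_algebra sc br" using F unfolding filiform_def by simp
  have L1: "vector_space sc" using L unfolding lie_algebra_def by blast
  have L2: "\<And>x. Vector_Spaces.linear sc sc (br x)" using L unfolding lie_algebra_def by blast
  have L3: "\<And>y. Vector_Spaces.linear sc sc (\<lambda>x. br x y)" using L unfolding lie_algebra_def by blast
  have L4: "\<And>x. br x x = 0" using L unfolding lie_algebra_def by blast
  have L5: "\<And>x y z. br x (br y z) + br y (br z x) + br z (br x y) = 0"
    using L unfolding lie_algebra_def by blast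
  have A1: "is_basis_seq sc n e" using E(1) unfolding adapted_basis_def by blast
  have A2: "\<And>h. 3 \<le> h \<Longrightarrow> h \<le> n \<Longrightarrow> br (e 1) (e h) = e (h - 1)"
    using E(1) unfolding adapted_basis_def by blast
  have A3: "\<And>h. 1 \<le> h \<Longrightarrow> h \<le> n \<Longrightarrow> br (e 2) (e h) = 0"
    using E(1) unfolding adapted_basis_def by blast
  have A4: "\<And>h. 2 \<le> h \<Longrightarrow> h \<le> n \<Longrightarrow> br (e 3) (e h) = 0"
    using E(1) unfolding adapted_basis_def by blast
  have A5: "\<And>k. 2 \<le> k \<Longrightarrow> k \<le> n \<Longrightarrow> ldim sc (lcs sc br k) = n - k"
    using F unfolding filiform_def by blast
  have A6: "\<And>k. 4 \<le> k \<Longrightarrow> k < n - 2 \<Longrightarrow> br (e k) (e (k + 1)) = 0" using E(5) by blast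
  interpret fil sc br n e
    by (rule fil.intro[OF L1 L2 L3 L4 L5 A1 A2 A3 A4 A5 n6 A6 z2b])
  show ?thesis by (rule result)
qed

end
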